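(* Assume the shortest $s_0$-$s_1$ path in the Wheatstone graph is unique. Then for every choice of positive lengths and positive initial diameters, the Physarum dynamics on the Wheatstone graph stabilize: every edge either becomes horizontal or becomes directed.
   Context: The Wheatstone graph has vertices $s_0,s_1,\ell,r$ and five edges $a=\{s_0,r\}$, $b=\{s_0,\ell\}$, $c=\{r,s_1\}$, $d=\{\ell,s_1\}$, $e=\{\ell,r\}$, each with length $L_x>0$ and time-dependent diameter $D_x(t)$ with $D_x(0)>0$. Physarum dynamics: a unit electrical current is sent from $s_0$ to $s_1$ through the network with resistances $R_x=L_x/D_x$ (potentials $p_v$ solve Kirchhoff's equations with net outflow $1$ at $s_0$, $-1$ at $s_1$, $0$ elsewhere; current on edge $x=\{u,v\}$ is $(p_u-p_v)/R_x$), and $\dot D_x=|Q_x|-D_x$ for each edge $x$. An edge $\{u,v\}$ becomes horizontal if $|p_u(t)-p_v(t)|\to0$ as $t\to\infty$; it becomes directed from $u$ to $v$ if $p_u(t)>p_v(t)$ for all sufficiently large $t$. *)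

theory Defs
  imports "HOL-Analysis.Analysis"
begin

datatype wvertex = S0 | S1 | Lv | Rv
datatype wedge = Ea | Eb | Ec | Ed | Ee

definition wedges :: "wedge set" where
  "wedges = {Ea, Eb, Ec, Ed, Ee}"

text \<open>A fixed (arbitrary) orientation of each undirected edge, used only to
  define the signed current; the dynamics only depend on its absolute value.\<close>
fun ends :: "wedge \<Rightarrow> wvertex \<times> wvertex" where
  "ends Ea = (S0, Rv)"
| "ends Eb = (S0, Lv)"
| "ends Ec = (Rv, S1)"
| "ends Ed = (Lv, S1)"
| "ends Ee = (Lv, Rv)"

definition net_supply :: "wvertex \<Rightarrow> real" where
  "net_supply v = (if v = S0 then 1 else if v = S1 then -1 else 0)"

definition current :: "(wedge \<Rightarrow> real) \<Rightarrow> (wedge \<Rightarrow> real) \<Rightarrow> (wvertex \<Rightarrow> real) \<Rightarrow> wedge \<Rightarrow> real" where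
  "current L D p x = (p (fst (ends x)) - p (snd (ends x))) / (L x / D x)"

definition kirchhoff :: "(wedge \<Rightarrow> real) \<Rightarrow> (wedge \<Rightarrow> real) \<Rightarrow> (wvertex \<Rightarrow> real) \<Rightarrow> bool" where
  "kirchhoff L D p \<longleftrightarrow>
     (\<forall>v. (\<Sum>x\<in>{x\<in>wedges. fst (ends x) = v}. current L D p x)
          - (\<Sum>x\<in>{x\<in>wedges. snd (ends x) = v}. current L D p x) = net_supply v)"

text \<open>Lengths of the four simple s0-s1 paths: a c, b d, a e d, b e c.\<close>
definition path_lengths :: "(wedge \<Rightarrow> real) \<Rightarrow> real list" where
  "path_lengths L = [L Ea + L Ec, L Eb + L Ed, L Ea + L Ee + L Ed, L Eb + L Ee + L Ec]"

definition unique_shortest_path :: "(wedge \<Rightarrow> real) \<Rightarrow> bool" where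
  "unique_shortest_path L \<longleftrightarrow>
     (\<exists>i < length (path_lengths L). \<forall>j < length (path_lengths L).
         j \<noteq> i \<longrightarrow> path_lengths L ! i < path_lengths L ! j)"

definition physarum_solution ::
  "(wedge \<Rightarrow> real) \<Rightarrow> (real \<Rightarrow> wedge \<Rightarrow> real) \<Rightarrow> (real \<Rightarrow> wvertex \<Rightarrow> real) \<Rightarrow> bool" where
  "physarum_solution L D p \<longleftrightarrow>
     (\<forall>t\<ge>0. kirchhoff L (D t) (p t)) \<and>
     (\<forall>x\<in>wedges. \<forall>t\<ge>0.
        ((\<lambda>s. D s x) has_real_derivative (\<bar>current L (D t) (p t) x\<bar> - D t x)) (at t within {0..}))"

definition becomes_horizontal :: "(real \<Rightarrow> wvertex \<Rightarrow> real) \<Rightarrow> wedge \<Rightarrow> bool" where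
  "becomes_horizontal p x \<longleftrightarrow>
     ((\<lambda>t. \<bar>p t (fst (ends x)) - p t (snd (ends x))\<bar>) \<longlongrightarrow> 0) at_top"

definition directed_from :: "(real \<Rightarrow> wvertex \<Rightarrow> real) \<Rightarrow> wvertex \<Rightarrow> wvertex \<Rightarrow> bool" where
  "directed_from p u v \<longleftrightarrow> (\<forall>\<^sub>F t in at_top. p t u > p t v)"

definition becomes_directed :: "(real \<Rightarrow> wvertex \<Rightarrow> real) \<Rightarrow> wedge \<Rightarrow> bool" where
  "becomes_directed p x \<longleftrightarrow>
     directed_from p (fst (ends x)) (snd (ends x)) \<or> directed_from p (snd (ends x)) (fst (ends x))"

end

theory Submission
  imports Defs
begin
lemma pos_below2: "(0::real) < a \<Longrightarrow> 0 < b \<Longrightarrow> \<exists>h>0. h < a \<and> h < b"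
proof (cases "a \<le> b")
  case True
  assume "0 < a" "0 < b" then show ?thesis using True by (intro exI[of _ "a/2"]) auto
next
  case False
  assume "0 < a" "0 < b" then show ?thesis using False by (intro exI[of _ "b/2"]) auto
qed

lemma barrier_core:
  fixes f f' :: "real \<Rightarrow> real"
  assumes T: "T > 0"
    and der: "\<And>t. t \<ge> T \<Longrightarrow> (f has_real_derivative f' t) (at t)"
    and zero: "\<And>t. t \<ge> T \<Longrightarrow> f t = 0 \<Longrightarrow> f' t < 0"
    and t0: "t0 \<ge> T" "f t0 \<le> 0"
  shows "\<forall>t>t0. f t < 0"
proof -
  have cont: "\<And>t. t \<ge> T \<Longrightarrow> isCont f t" using der DERIV_isCont by blast
  have "\<exists>d>0. \<forall>h>0. h < d \<longrightarrow> f (t0 + h) < 0"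
  proof (cases "f t0 = 0")
    case True
    then show ?thesis using DERIV_neg_dec_right[OF der[OF t0(1)] zero[OF t0(1) True]] by auto
  next
    case False
    then have "f t0 < 0" using t0 by auto
    from LIM_fun_less_zero[OF cont[OF t0(1), unfolded isCont_def] this]
    obtain r where r: "r > 0" "\<forall>x. x \<noteq> t0 \<and> \<bar>t0 - x\<bar> < r \<longrightarrow> f x < 0" by blast
    show ?thesis using r by (intro exI[of _ r]) auto
  qed
  then obtain d where d: "d > 0" "\<And>h. h > 0 \<Longrightarrow> h < d \<Longrightarrow> f (t0 + h) < 0" by blast
  show ?thesis
  proof (rule ccontr)
    assume "\<not> ?thesis"
    then obtain t1 where t1: "t1 > t0" "f t1 \<ge> 0" by (auto simp: not_less)
    obtain e where e: "0 < e" "e < d" "e < t1 - t0"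
      using pos_below2[of d "t1 - t0"] d t1 by auto
    define s0 where "s0 = t0 + e"
    have "f s0 < 0" unfolding s0_def by (rule d(2)) (use e in auto)
    have s0: "s0 > t0" "s0 < t1" "f s0 < 0" using e \<open>f s0 < 0\<close> unfolding s0_def by auto
    define S where "S = {s0..t1} \<inter> f -` {0..}"
    have contS: "continuous_on {s0..t1} f"
      using cont s0 t0 by (intro continuous_at_imp_continuous_on) auto
    have clS: "closed S" unfolding S_def
      by (rule continuous_closed_preimage[OF contS]) auto
    have "t1 \<in> S" using t1 s0 unfolding S_def by auto
    then have neS: "S \<noteq> {}" by auto
    have bdS: "bdd_below S" unfolding S_def by (auto intro: bdd_belowI[of _ s0])
    define m where "m = Inf S"
    have mS: "m \<in> S" using closed_contains_Inf[OF neS bdS clS] m_def by simp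
    then have m: "s0 \<le> m" "m \<le> t1" "f m \<ge> 0" unfolding S_def by auto
    have mne: "m \<noteq> s0" using m s0 by auto
    have left: "f t < 0" if "s0 \<le> t" "t < m" for t
    proof (rule ccontr)
      assume "\<not> f t < 0"
      then have "t \<in> S" using that m unfolding S_def by auto
      then have "m \<le> t" unfolding m_def using bdS by (rule cInf_lower)
      then show False using that by simp
    qed
    have mT: "m \<ge> T" using m s0 t0 by simp
    have "f m \<le> 0"
    proof (rule ccontr)
      assume "\<not> f m \<le> 0"
      then have "f m > 0" by simp
      from LIM_fun_gt_zero[OF cont[OF mT, unfolded isCont_def] this]
      obtain r where r: "r > 0" "\<forall>x. x \<noteq> m \<and> \<bar>m - x\<bar> < r \<longrightarrow> 0 < f x" by blast
      obtain e where e: "0 < e" "e < r" "e < m - s0"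
        using pos_below2[of r "m - s0"] r mne m by auto
      define x where "x = m - e"
      have "s0 \<le> x" "x < m" "x \<noteq> m" "\<bar>m - x\<bar> < r" using e unfolding x_def by auto
      then have "0 < f x" using r(2)[rule_format, of x] by blast
      moreover have "f x < 0" using left \<open>s0 \<le> x\<close> \<open>x < m\<close> by blast
      ultimately show False by simp
    qed
    then have fm: "f m = 0" using m by simp
    from DERIV_neg_dec_left[OF der[OF mT] zero[OF mT fm]]
    obtain d' where d': "d' > 0" "\<forall>h>0. h < d' \<longrightarrow> f m < f (m - h)" by blast
    obtain h where "h > 0" "h < d'" "h < m - s0"
      using pos_below2[of d' "m - s0"] d' mne m by auto
    then have "s0 \<le> m - h" "m - h < m" by auto
    then have "f (m - h) < 0" using left by blast
    moreover have "f m < f (m - h)" using d'(2)[rule_format, of h] \<open>h > 0\<close> \<open>h < d'\<close> by blast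
    ultimately show False using fm by simp
  qed
qed

lemma barrier_ev:
  fixes f f' :: "real \<Rightarrow> real"
  assumes T: "T > 0"
    and der: "\<And>t. t \<ge> T \<Longrightarrow> (f has_real_derivative f' t) (at t)"
    and zero: "\<And>t. t \<ge> T \<Longrightarrow> f t = 0 \<Longrightarrow> f' t < 0"
  shows "(\<forall>\<^sub>F t in at_top. f t > 0) \<or> (\<forall>\<^sub>F t in at_top. f t < 0)"
proof (cases "\<forall>t\<ge>T. f t > 0")
  case True
  then show ?thesis unfolding eventually_at_top_linorder by blast
next
  case False
  then obtain t0 where t0: "t0 \<ge> T" "f t0 \<le> 0" by (auto simp: not_less)
  have "\<forall>t>t0. f t < 0" by (rule barrier_core[OF T der zero t0]) auto
  then have "\<forall>t\<ge>t0+1. f t < 0" by auto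
  then show ?thesis unfolding eventually_at_top_linorder by blast
qed

lemma barrier_ev':
  fixes f f' :: "real \<Rightarrow> real"
  assumes T: "T > 0"
    and der: "\<And>t. t \<ge> T \<Longrightarrow> (f has_real_derivative f' t) (at t)"
    and zero: "\<And>t. t \<ge> T \<Longrightarrow> f t = 0 \<Longrightarrow> f' t > 0"
  shows "(\<forall>\<^sub>F t in at_top. f t > 0) \<or> (\<forall>\<^sub>F t in at_top. f t < 0)"
proof -
  have "(\<forall>\<^sub>F t in at_top. - f t > 0) \<or> (\<forall>\<^sub>F t in at_top. - f t < 0)"
  proof (rule barrier_ev[OF T, of _ "\<lambda>t. - f' t"])
    fix t assume "T \<le> t"
    then show "((\<lambda>t. - f t) has_real_derivative - f' t) (at t)" using der by (intro DERIV_minus) auto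
  next
    fix t assume "T \<le> t" "- f t = 0"
    then show "- f' t < 0" using zero[of t] by auto
  qed
  then show ?thesis by auto
qed

lemma sign_mult_pos: "0 < (c::real) \<Longrightarrow> (0 < c*x \<longleftrightarrow> 0 < x) \<and> (c*x < 0 \<longleftrightarrow> x < 0) \<and> (c*x = 0 \<longleftrightarrow> x = 0)"
  by (auto simp: zero_less_mult_iff mult_less_0_iff)

lemma ln_der:
  fixes x :: "real \<Rightarrow> real"
  assumes "(x has_real_derivative x t * (d / L - 1)) (at t)" "0 < x t" "0 < L"
  shows "((\<lambda>s. ln (x s / L)) has_real_derivative (d / L - 1)) (at t)"
proof -
  have "((\<lambda>s. ln (x s / L)) has_real_derivative (1 / (x t / L)) * (x t * (d / L - 1) / L)) (at t)"
    by (rule DERIV_chain2[OF DERIV_ln_divide DERIV_cdivide[OF assms(1)]]) (use assms in simp)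
  moreover have "(1 / (x t / L)) * (x t * (d / L - 1) / L) = d / L - 1" using assms by (simp add: field_simps)
  ultimately show ?thesis by simp
qed

locale wsys =
  fixes La Lb Lc Ld :: real
    and xa xb xc xd da db dc dd de P w :: "real \<Rightarrow> real"
  assumes Lpos: "0 < La" "0 < Lb" "0 < Lc" "0 < Ld"
    and xpos: "\<And>t. 0 < t \<Longrightarrow> 0 < xa t" "\<And>t. 0 < t \<Longrightarrow> 0 < xb t"
              "\<And>t. 0 < t \<Longrightarrow> 0 < xc t" "\<And>t. 0 < t \<Longrightarrow> 0 < xd t"
    and dpos: "\<And>t. 0 < t \<Longrightarrow> 0 < da t" "\<And>t. 0 < t \<Longrightarrow> 0 < db t"
              "\<And>t. 0 < t \<Longrightarrow> 0 < dc t" "\<And>t. 0 < t \<Longrightarrow> 0 < dd t"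
    and Pac: "\<And>t. 0 < t \<Longrightarrow> P t = da t + dc t"
    and Pbd: "\<And>t. 0 < t \<Longrightarrow> P t = db t + dd t"
    and de_eq: "\<And>t. 0 < t \<Longrightarrow> de t = da t - db t"
    and flow1: "\<And>t. 0 < t \<Longrightarrow> xa t * da t / La + xb t * db t / Lb = 1"
    and flow2: "\<And>t. 0 < t \<Longrightarrow> xc t * dc t / Lc + xd t * dd t / Ld = 1"
    and tell: "\<And>t. 0 < t \<Longrightarrow> xa t * (da t)\<^sup>2 / La + xb t * (db t)\<^sup>2 / Lb
                   + xc t * (dc t)\<^sup>2 / Lc + xd t * (dd t)\<^sup>2 / Ld \<le> P t"
    and wpos: "\<And>t. 0 < t \<Longrightarrow> 0 < w t"
    and de_form: "\<And>t. 0 < t \<Longrightarrow> de t = P t * ((xb t / Lb) * (xc t / Lc) - (xa t / La) * (xd t / Ld)) * w t"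
    and wbound: "\<And>t. 0 < t \<Longrightarrow> w t * ((xb t / Lb + xd t / Ld) * (xa t / La + xc t / Lc)) \<le> 1"
    and dxa: "\<And>t. 0 < t \<Longrightarrow> (xa has_real_derivative xa t * (da t / La - 1)) (at t)"
    and dxb: "\<And>t. 0 < t \<Longrightarrow> (xb has_real_derivative xb t * (db t / Lb - 1)) (at t)"
    and dxc: "\<And>t. 0 < t \<Longrightarrow> (xc has_real_derivative xc t * (dc t / Lc - 1)) (at t)"
    and dxd: "\<And>t. 0 < t \<Longrightarrow> (xd has_real_derivative xd t * (dd t / Ld - 1)) (at t)"
begin

definition "phi = (\<lambda>t. ln (xb t / Lb) + ln (xc t / Lc) - ln (xa t / La) - ln (xd t / Ld))"
definition "phi' = (\<lambda>t. db t / Lb + dc t / Lc - da t / La - dd t / Ld)"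

lemma phi_der:
  assumes t: "0 < t" shows "(phi has_real_derivative phi' t) (at t)"
proof -
  have "((\<lambda>s. ln (xb s / Lb) + ln (xc s / Lc) - ln (xa s / La) - ln (xd s / Ld)) has_real_derivative
     ((db t / Lb - 1) + (dc t / Lc - 1) - (da t / La - 1) - (dd t / Ld - 1))) (at t)"
    by (intro DERIV_diff DERIV_add ln_der dxa dxb dxc dxd xpos Lpos t)
  then show ?thesis unfolding phi_def phi'_def by (rule DERIV_cong) simp
qed

lemma phi_sign:
  assumes t: "0 < t"
  shows "(0 < de t \<longleftrightarrow> 0 < phi t) \<and> (de t < 0 \<longleftrightarrow> phi t < 0) \<and> (de t = 0 \<longleftrightarrow> phi t = 0)"
proof -
  define G where "G = (xb t / Lb) * (xc t / Lc)"
  define H where "H = (xa t / La) * (xd t / Ld)"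
  have G0: "0 < G" unfolding G_def using xpos[OF t] Lpos by simp
  have H0: "0 < H" unfolding H_def using xpos[OF t] Lpos by simp
  have g1: "ln G = ln (xb t / Lb) + ln (xc t / Lc)" unfolding G_def
    by (rule ln_mult_pos) (use xpos[OF t] Lpos in simp_all)
  have h1: "ln H = ln (xa t / La) + ln (xd t / Ld)" unfolding H_def
    by (rule ln_mult_pos) (use xpos[OF t] Lpos in simp_all)
  have ph: "phi t = ln G - ln H" unfolding phi_def g1 h1 by simp
  have P0: "0 < P t" using Pac[OF t] dpos[OF t] by simp
  have pw: "0 < P t * w t" using P0 wpos[OF t] by simp
  have de: "de t = (P t * w t) * (G - H)" unfolding G_def H_def using de_form[OF t] by (simp add: algebra_simps)
  note sg = sign_mult_pos[OF pw, of "G - H"]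
  have s1: "0 < de t \<longleftrightarrow> H < G" unfolding de using sg by simp
  have s2: "de t < 0 \<longleftrightarrow> G < H" unfolding de using sg by simp
  have s3: "de t = 0 \<longleftrightarrow> G = H" unfolding de using sg by simp
  have l1: "0 < phi t \<longleftrightarrow> H < G" unfolding ph using G0 H0 by simp
  have l2: "phi t < 0 \<longleftrightarrow> G < H" unfolding ph using G0 H0 by simp
  have l3: "phi t = 0 \<longleftrightarrow> G = H" unfolding ph using G0 H0 by simp
  show ?thesis using s1 s2 s3 l1 l2 l3 by simp
qed

lemma phi_zero:
  assumes t: "0 < t" and z: "phi t = 0"
  shows "da t = db t" "dc t = dd t"
proof -
  have "de t = 0" using phi_sign[OF t] z by simp
  then show "da t = db t" using de_eq[OF t] by simp
  then show "dc t = dd t" using Pac[OF t] Pbd[OF t] by simp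
qed

lemma phi_stab:
  assumes "T \<ge> 1" and "(\<forall>t\<ge>T. phi t = 0 \<longrightarrow> phi' t < 0) \<or> (\<forall>t\<ge>T. phi t = 0 \<longrightarrow> phi' t > 0)"
  shows "(\<forall>\<^sub>F t in at_top. de t > 0) \<or> (\<forall>\<^sub>F t in at_top. de t < 0)"
proof -
  have T0: "0 < T" using assms(1) by simp
  have der: "\<And>t. t \<ge> T \<Longrightarrow> (phi has_real_derivative phi' t) (at t)" using phi_der T0 by simp
  have "(\<forall>\<^sub>F t in at_top. phi t > 0) \<or> (\<forall>\<^sub>F t in at_top. phi t < 0)"
    using assms(2)
  proof
    assume "\<forall>t\<ge>T. phi t = 0 \<longrightarrow> phi' t < 0"
    then show ?thesis by (intro barrier_ev[OF T0 der]) auto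
  next
    assume "\<forall>t\<ge>T. phi t = 0 \<longrightarrow> phi' t > 0"
    then show ?thesis by (intro barrier_ev'[OF T0 der]) auto
  qed
  moreover have ev0: "\<forall>\<^sub>F t in at_top. (0::real) < t" by (rule eventually_gt_at_top)
  ultimately show ?thesis
  proof (elim disjE)
    assume "\<forall>\<^sub>F t in at_top. phi t > 0"
    with ev0 have "\<forall>\<^sub>F t in at_top. de t > 0"
      by eventually_elim (use phi_sign in blast)
    then show ?thesis by simp
  next
    assume "\<forall>\<^sub>F t in at_top. phi t < 0"
    with ev0 have "\<forall>\<^sub>F t in at_top. de t < 0"
      by eventually_elim (use phi_sign in blast)
    then show ?thesis by simp
  qed
qed

lemma caseA:
  assumes "La \<le> Lb" "Ld \<le> Lc" "La < Lb \<or> Ld < Lc"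
  shows "(\<forall>\<^sub>F t in at_top. de t > 0) \<or> (\<forall>\<^sub>F t in at_top. de t < 0)"
proof (rule phi_stab[of 1])
  have "phi' t < 0" if t: "t \<ge> 1" "phi t = 0" for t
  proof -
    have t0: "0 < t" using t by simp
    have e: "phi' t = db t * (1 / Lb - 1 / La) + dc t * (1 / Lc - 1 / Ld)"
      unfolding phi'_def using phi_zero[OF t0 t(2)] by (simp add: algebra_simps)
    have c1: "1 / Lb - 1 / La \<le> 0" using assms Lpos by (simp add: frac_le)
    have c2: "1 / Lc - 1 / Ld \<le> 0" using assms Lpos by (simp add: frac_le)
    have c3: "1 / Lb - 1 / La < 0 \<or> 1 / Lc - 1 / Ld < 0" using assms Lpos by (auto simp: frac_less2)
    have "db t * (1 / Lb - 1 / La) \<le> 0" using c1 dpos[OF t0] by (simp add: mult_nonneg_nonpos)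
    moreover have "dc t * (1 / Lc - 1 / Ld) \<le> 0" using c2 dpos[OF t0] by (simp add: mult_nonneg_nonpos)
    moreover have "db t * (1 / Lb - 1 / La) < 0 \<or> dc t * (1 / Lc - 1 / Ld) < 0"
      using c3 dpos[OF t0] by (auto simp: mult_pos_neg)
    ultimately show ?thesis unfolding e by linarith
  qed
  then show "(\<forall>t\<ge>1. phi t = 0 \<longrightarrow> phi' t < 0) \<or> (\<forall>t\<ge>1. phi t = 0 \<longrightarrow> phi' t > 0)" by auto
qed simp

end

lemma ln_der2:
  fixes x :: "real \<Rightarrow> real"
  assumes "(x has_real_derivative x t * v) (at t)" "0 < x t"
  shows "((\<lambda>s. ln (x s)) has_real_derivative v) (at t)"
proof -
  have "((\<lambda>s. ln (x s)) has_real_derivative (1 / x t) * (x t * v)) (at t)"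
    by (rule DERIV_chain2[OF DERIV_ln_divide assms(1)]) (use assms in simp)
  then show ?thesis using assms by simp
qed

lemma exp_decay: "((\<lambda>t::real. exp (1 - t)) \<longlongrightarrow> 0) at_top"
proof -
  have "((\<lambda>t::real. inverse (exp t)) \<longlongrightarrow> 0) at_top" by (rule tendsto_inverse_0_at_top) (rule exp_at_top)
  then have "((\<lambda>t::real. exp 1 * inverse (exp t)) \<longlongrightarrow> exp 1 * 0) at_top"
    by (intro tendsto_mult tendsto_const)
  moreover have "\<And>t::real. exp 1 * inverse (exp t) = exp (1 - t)" by (simp add: exp_diff field_simps)
  ultimately show ?thesis by simp
qed

lemma small_mult: "0 \<le> e \<Longrightarrow> e \<le> 1 \<Longrightarrow> (c::real) * e \<le> \<bar>c\<bar>"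
proof -
  assume e: "0 \<le> e" "e \<le> 1"
  have "c * e \<le> \<bar>c\<bar> * e" by (rule mult_right_mono) (use e in auto)
  also have "\<dots> \<le> \<bar>c\<bar>" by (rule mult_left_le) (use e in auto)
  finally show ?thesis .
qed

lemma const_on_from1:
  fixes f :: "real \<Rightarrow> real"
  assumes der: "\<And>s. 0 < s \<Longrightarrow> (f has_real_derivative 0) (at s)" and t: "1 \<le> t"
  shows "f t = f 1"
proof (cases "t = 1")
  case False
  then have "1 < t" using t by simp
  moreover have "continuous_on {1..t} f"
    by (intro continuous_at_imp_continuous_on ballI DERIV_isCont[OF der]) auto
  ultimately show ?thesis by (rule DERIV_isconst2[of 1 t f t]) (use der t in auto)
qed simp

context wsys begin

lemma qle: assumes t: "0 < t"
  shows "xa t * da t / La \<le> 1" "xb t * db t / Lb \<le> 1" "xc t * dc t / Lc \<le> 1" "xd t * dd t / Ld \<le> 1"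
proof -
  have p: "0 \<le> xa t * da t / La" "0 \<le> xb t * db t / Lb" "0 \<le> xc t * dc t / Lc" "0 \<le> xd t * dd t / Ld"
    using xpos[OF t] dpos[OF t] Lpos by simp_all
  show "xa t * da t / La \<le> 1" "xb t * db t / Lb \<le> 1" using flow1[OF t] p by linarith+
  show "xc t * dc t / Lc \<le> 1" "xd t * dd t / Ld \<le> 1" using flow2[OF t] p by linarith+
qed

lemma sum_ab: assumes t: "1 \<le> t"
  shows "xa t + xb t = 1 + (xa 1 + xb 1 - 1) * exp (1 - t)"
proof -
  define f where "f = (\<lambda>s. exp s * (xa s + xb s - 1))"
  have "(f has_real_derivative 0) (at s)" if s: "0 < s" for s
  proof -
    have h: "xa s * (da s / La - 1) + xb s * (db s / Lb - 1) = 1 - xa s - xb s"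
      using flow1[OF s] by (simp add: algebra_simps)
    have "(f has_real_derivative exp s * (xa s + xb s - 1) + exp s * (xa s * (da s / La - 1) + xb s * (db s / Lb - 1))) (at s)"
    proof -
      have d1: "((\<lambda>s. xa s + xb s - 1) has_real_derivative xa s * (da s / La - 1) + xb s * (db s / Lb - 1) - 0) (at s)"
        by (intro DERIV_diff DERIV_add dxa dxb s DERIV_const)
      have "((\<lambda>s. exp s * (xa s + xb s - 1)) has_real_derivative exp s * (xa s + xb s - 1) + (xa s * (da s / La - 1) + xb s * (db s / Lb - 1) - 0) * exp s) (at s)"
        by (rule DERIV_mult[OF DERIV_exp d1])
      then show ?thesis unfolding f_def by (rule DERIV_cong) (simp add: algebra_simps)
    qed
    then show ?thesis unfolding h by (rule DERIV_cong) (simp add: algebra_simps)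
  qed
  then have "f t = f 1" using const_on_from1 t by blast
  then have "exp t * (xa t + xb t - 1) = exp 1 * (xa 1 + xb 1 - 1)" unfolding f_def by simp
  then have "xa t + xb t - 1 = (xa 1 + xb 1 - 1) * (exp 1 / exp t)" by (simp add: field_simps)
  then show ?thesis by (simp add: exp_diff)
qed

lemma sum_cd: assumes t: "1 \<le> t"
  shows "xc t + xd t = 1 + (xc 1 + xd 1 - 1) * exp (1 - t)"
proof -
  define f where "f = (\<lambda>s. exp s * (xc s + xd s - 1))"
  have "(f has_real_derivative 0) (at s)" if s: "0 < s" for s
  proof -
    have h: "xc s * (dc s / Lc - 1) + xd s * (dd s / Ld - 1) = 1 - xc s - xd s"
      using flow2[OF s] by (simp add: algebra_simps)
    have "(f has_real_derivative exp s * (xc s + xd s - 1) + exp s * (xc s * (dc s / Lc - 1) + xd s * (dd s / Ld - 1))) (at s)"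
    proof -
      have d1: "((\<lambda>s. xc s + xd s - 1) has_real_derivative xc s * (dc s / Lc - 1) + xd s * (dd s / Ld - 1) - 0) (at s)"
        by (intro DERIV_diff DERIV_add dxc dxd s DERIV_const)
      have "((\<lambda>s. exp s * (xc s + xd s - 1)) has_real_derivative exp s * (xc s + xd s - 1) + (xc s * (dc s / Lc - 1) + xd s * (dd s / Ld - 1) - 0) * exp s) (at s)"
        by (rule DERIV_mult[OF DERIV_exp d1])
      then show ?thesis unfolding f_def by (rule DERIV_cong) (simp add: algebra_simps)
    qed
    then show ?thesis unfolding h by (rule DERIV_cong) (simp add: algebra_simps)
  qed
  then have "f t = f 1" using const_on_from1 t by blast
  then have "exp t * (xc t + xd t - 1) = exp 1 * (xc 1 + xd 1 - 1)" unfolding f_def by simp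
  then have "xc t + xd t - 1 = (xc 1 + xd 1 - 1) * (exp 1 / exp t)" by (simp add: field_simps)
  then show ?thesis by (simp add: exp_diff)
qed

definition "Mx = 1 + \<bar>xa 1 + xb 1 - 1\<bar> + \<bar>xc 1 + xd 1 - 1\<bar>"

lemma xbound: assumes t: "1 \<le> t"
  shows "xa t \<le> Mx" "xb t \<le> Mx" "xc t \<le> Mx" "xd t \<le> Mx"
proof -
  have t0: "0 < t" using t by simp
  have e: "exp (1 - t) \<le> 1" "0 < exp (1 - t)" using t by auto
  have "(xa 1 + xb 1 - 1) * exp (1 - t) \<le> \<bar>xa 1 + xb 1 - 1\<bar>"
    using e by (intro small_mult) auto
  moreover have "(xc 1 + xd 1 - 1) * exp (1 - t) \<le> \<bar>xc 1 + xd 1 - 1\<bar>"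
    using e by (intro small_mult) auto
  ultimately show "xa t \<le> Mx" "xb t \<le> Mx" "xc t \<le> Mx" "xd t \<le> Mx"
    using sum_ab[OF t] sum_cd[OF t] xpos[OF t0] unfolding Mx_def by auto
qed

lemma lim_ab: "((\<lambda>t. xa t + xb t) \<longlongrightarrow> 1) at_top"
proof -
  have "((\<lambda>t. 1 + (xa 1 + xb 1 - 1) * exp (1 - t)) \<longlongrightarrow> 1 + (xa 1 + xb 1 - 1) * 0) at_top"
    by (intro tendsto_intros exp_decay)
  then have "((\<lambda>t. 1 + (xa 1 + xb 1 - 1) * exp (1 - t)) \<longlongrightarrow> 1) at_top" by simp
  moreover have "\<forall>\<^sub>F t in at_top. 1 + (xa 1 + xb 1 - 1) * exp (1 - t) = xa t + xb t"
    by (rule eventually_mono[OF eventually_ge_at_top[of 1]], rule sum_ab[symmetric])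
  ultimately show ?thesis by (rule Lim_transform_eventually)
qed

lemma lim_cd: "((\<lambda>t. xc t + xd t) \<longlongrightarrow> 1) at_top"
proof -
  have "((\<lambda>t. 1 + (xc 1 + xd 1 - 1) * exp (1 - t)) \<longlongrightarrow> 1 + (xc 1 + xd 1 - 1) * 0) at_top"
    by (intro tendsto_intros exp_decay)
  then have "((\<lambda>t. 1 + (xc 1 + xd 1 - 1) * exp (1 - t)) \<longlongrightarrow> 1) at_top" by simp
  moreover have "\<forall>\<^sub>F t in at_top. 1 + (xc 1 + xd 1 - 1) * exp (1 - t) = xc t + xd t"
    by (rule eventually_mono[OF eventually_ge_at_top[of 1]], rule sum_cd[symmetric])
  ultimately show ?thesis by (rule Lim_transform_eventually)
qed

end

lemma amgm_lem: "0 < (L::real) \<Longrightarrow> 0 \<le> x \<Longrightarrow> 2 * (x * d) \<le> L * x + x * d\<^sup>2 / L"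
proof -
  assume L: "0 < L" and x: "0 \<le> x"
  have "0 \<le> x * (L - d)\<^sup>2 / L" using L x by simp
  moreover have "x * (L - d)\<^sup>2 / L = L * x - 2 * (x * d) + x * d\<^sup>2 / L"
    using L by (simp add: field_simps power2_eq_square)
  ultimately show ?thesis by linarith
qed

locale wsysB = wsys +
  assumes LB: "La < Lb" "Lc < Ld"
begin

definition "gam = min (Lb - La) (Ld - Lc)"
definition "Hf = (\<lambda>t. La * xa t + Lb * xb t + Lc * xc t + Ld * xd t - La * ln (xa t) - Lc * ln (xc t)
                     + gam * (xb t + xd t))"
definition "Hd = (\<lambda>t. La * (xa t * (da t / La - 1)) + Lb * (xb t * (db t / Lb - 1))
                 + Lc * (xc t * (dc t / Lc - 1)) + Ld * (xd t * (dd t / Ld - 1))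
                 - La * (da t / La - 1) - Lc * (dc t / Lc - 1)
                 + gam * (xb t * (db t / Lb - 1) + xd t * (dd t / Ld - 1)))"

lemma gam_pos: "0 < gam" unfolding gam_def using LB by simp

lemma H_der: assumes t: "0 < t" shows "(Hf has_real_derivative Hd t) (at t)"
  unfolding Hf_def Hd_def
  by (intro DERIV_add DERIV_diff DERIV_cmult ln_der2 dxa dxb dxc dxd xpos t)

lemma H_dec: assumes t: "0 < t" shows "Hd t \<le> - gam * (xb t + xd t)"
proof -
  define S where "S = xa t * da t + xb t * db t + xc t * dc t + xd t * dd t"
  define V where "V = La * xa t + Lb * xb t + Lc * xc t + Ld * xd t"
  define T where "T = xa t * (da t)\<^sup>2 / La + xb t * (db t)\<^sup>2 / Lb + xc t * (dc t)\<^sup>2 / Lc + xd t * (dd t)\<^sup>2 / Ld"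
  define qb where "qb = xb t * db t / Lb"
  define qd where "qd = xd t * dd t / Ld"
  note xp = xpos[OF t] and dp = dpos[OF t]
  have e1: "Hd t = S - V - (da t + dc t) + La + Lc + gam * qb + gam * qd - gam * (xb t + xd t)"
    unfolding Hd_def S_def V_def qb_def qd_def using Lpos by (simp add: field_simps)
  have am: "2 * S \<le> V + T"
    using amgm_lem[OF Lpos(1), of "xa t" "da t"] amgm_lem[OF Lpos(2), of "xb t" "db t"]
      amgm_lem[OF Lpos(3), of "xc t" "dc t"] amgm_lem[OF Lpos(4), of "xd t" "dd t"] xp
    unfolding S_def V_def T_def by simp
  have tl: "T \<le> da t + dc t" unfolding T_def using tell[OF t] Pac[OF t] by simp
  have fa: "xa t * da t = La * (1 - qb)"
  proof -
    have "xa t * da t / La = 1 - qb" using flow1[OF t] unfolding qb_def by simp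
    then show ?thesis using Lpos by (simp add: field_simps)
  qed
  have fc: "xc t * dc t = Lc * (1 - qd)"
  proof -
    have "xc t * dc t / Lc = 1 - qd" using flow2[OF t] unfolding qd_def by simp
    then show ?thesis using Lpos by (simp add: field_simps)
  qed
  have fb: "xb t * db t = Lb * qb" unfolding qb_def using Lpos by simp
  have fd: "xd t * dd t = Ld * qd" unfolding qd_def using Lpos by simp
  have cS: "S = La + Lc + (Lb - La) * qb + (Ld - Lc) * qd"
    unfolding S_def fa fb fc fd by (simp add: algebra_simps)
  have qb0: "0 \<le> qb" unfolding qb_def using xp dp Lpos by simp
  have qd0: "0 \<le> qd" unfolding qd_def using xp dp Lpos by simp
  have g1: "gam * qb \<le> (Lb - La) * qb" by (rule mult_right_mono) (use qb0 in \<open>auto simp: gam_def\<close>)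
  have g2: "gam * qd \<le> (Ld - Lc) * qd" by (rule mult_right_mono) (use qd0 in \<open>auto simp: gam_def\<close>)
  show ?thesis using e1 am tl cS g1 g2 by linarith
qed

lemma H_lower: assumes t: "1 \<le> t" shows "- La * ln Mx - Lc * ln Mx \<le> Hf t"
proof -
  have t0: "0 < t" using t by simp
  note xp = xpos[OF t0]
  have "ln (xa t) \<le> ln Mx" using xbound[OF t] xp by simp
  then have a: "La * ln (xa t) \<le> La * ln Mx" using Lpos by simp
  have "ln (xc t) \<le> ln Mx" using xbound[OF t] xp by simp
  then have c: "Lc * ln (xc t) \<le> Lc * ln Mx" using Lpos by simp
  have "0 \<le> La * xa t + Lb * xb t + Lc * xc t + Ld * xd t" using xp Lpos by simp
  moreover have "0 \<le> gam * (xb t + xd t)" using gam_pos xp by simp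
  ultimately show ?thesis using a c unfolding Hf_def by linarith
qed

lemma H_mono: assumes "1 \<le> s" "s \<le> t" shows "Hf t \<le> Hf s"
proof (rule deriv_nonpos_imp_antimono[of s t Hf Hd])
  fix x assume x: "x \<in> {s..t}"
  then have x0: "0 < x" using assms by simp
  show "(Hf has_real_derivative Hd x) (at x)" by (rule H_der[OF x0])
  have "0 \<le> gam * (xb x + xd x)" using gam_pos xpos[OF x0] by simp
  then show "Hd x \<le> 0" using H_dec[OF x0] by linarith
qed (use assms in simp)

lemma G_grow: assumes "1 \<le> t" "t \<le> s" shows "exp t * (xb t + xd t) \<le> exp s * (xb s + xd s)"
proof (rule deriv_nonneg_imp_mono[of t s _ "\<lambda>u. exp u * (xb u + xd u) + (xb u * (db u / Lb - 1) + xd u * (dd u / Ld - 1)) * exp u"])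
  fix x assume x: "x \<in> {t..s}"
  then have x0: "0 < x" using assms by simp
  show "((\<lambda>u. exp u * (xb u + xd u)) has_real_derivative
     exp x * (xb x + xd x) + (xb x * (db x / Lb - 1) + xd x * (dd x / Ld - 1)) * exp x) (at x)"
    by (intro DERIV_mult DERIV_exp DERIV_add dxb dxd x0)
  have "exp x * (xb x + xd x) + (xb x * (db x / Lb - 1) + xd x * (dd x / Ld - 1)) * exp x
       = exp x * (xb x * db x / Lb + xd x * dd x / Ld)" by (simp add: algebra_simps)
  moreover have "0 \<le> exp x * (xb x * db x / Lb + xd x * dd x / Ld)"
    using xpos[OF x0] dpos[OF x0] Lpos by simp
  ultimately show "0 \<le> exp x * (xb x + xd x) + (xb x * (db x / Lb - 1) + xd x * (dd x / Ld - 1)) * exp x"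
    by simp
qed (use assms in simp)

lemma H_drop:
  assumes t: "1 \<le> t" and eta: "0 < eta" "eta \<le> xb t + xd t"
  shows "Hf (t + 1/2) \<le> Hf t - gam * eta / 4"
proof -
  have Glow: "eta / 2 \<le> xb s + xd s" if s: "t \<le> s" "s \<le> t + 1/2" for s
  proof -
    have "exp t * (xb t + xd t) \<le> exp s * (xb s + xd s)" using G_grow t s by simp
    then have "exp t / exp s * (xb t + xd t) \<le> xb s + xd s" by (simp add: field_simps)
    moreover have "exp t / exp s = exp (t - s)" by (simp add: exp_diff)
    moreover have "1/2 \<le> exp (t - s)"
    proof -
      have "1 + (-1/2) \<le> exp (-1/2::real)" by (rule exp_ge_add_one_self)
      moreover have "exp (-1/2::real) \<le> exp (t - s)" using s by simp
      ultimately show ?thesis by linarith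
    qed
    moreover have "eta \<le> xb t + xd t" using eta by simp
    ultimately have "1/2 * eta \<le> xb s + xd s"
      by (smt (verit) eta(1) mult_mono exp_gt_zero)
    then show ?thesis by simp
  qed
  have "(\<lambda>u. Hf u + gam * eta / 2 * u) (t + 1/2) \<le> (\<lambda>u. Hf u + gam * eta / 2 * u) t"
  proof (rule deriv_nonpos_imp_antimono[of t "t + 1/2" _ "\<lambda>u. Hd u + gam * eta / 2 * 1"])
    fix x assume x: "x \<in> {t..t + 1/2}"
    then have x0: "0 < x" using t by simp
    show "((\<lambda>u. Hf u + gam * eta / 2 * u) has_real_derivative Hd x + gam * eta / 2 * 1) (at x)"
      by (intro DERIV_add H_der x0 DERIV_cmult DERIV_ident)
    have "gam * (eta / 2) \<le> gam * (xb x + xd x)" using Glow[of x] x gam_pos by (intro mult_left_mono) auto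
    then show "Hd x + gam * eta / 2 * 1 \<le> 0" using H_dec[OF x0] by simp
  qed simp
  then have "Hf (t + 1/2) + gam * eta / 2 * (t + 1/2) \<le> Hf t + gam * eta / 2 * t" by simp
  moreover have "gam * eta / 2 * (t + 1/2) = gam * eta / 2 * t + gam * eta / 4" by (simp add: algebra_simps)
  ultimately show ?thesis by linarith
qed

lemma G_lim: "((\<lambda>t. xb t + xd t) \<longlongrightarrow> 0) at_top"
proof (rule ccontr)
  assume nc: "\<not> ?thesis"
  obtain eta where eta: "0 < eta" and fr: "\<And>T. \<exists>t\<ge>T. 1 \<le> t \<and> eta \<le> xb t + xd t"
  proof -
    from nc obtain e where e: "0 < e" and ne: "\<not> (\<forall>\<^sub>F t in at_top. dist (xb t + xd t) 0 < e)"
      unfolding tendsto_iff by blast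
    have "\<exists>t\<ge>T. 1 \<le> t \<and> e \<le> xb t + xd t" for T
    proof -
      from ne have "\<not> (\<forall>n\<ge>max T 1. dist (xb n + xd n) 0 < e)"
        unfolding eventually_at_top_linorder by blast
      then obtain n where n: "n \<ge> max T 1" "\<not> dist (xb n + xd n) 0 < e" by blast
      have "0 < n" using n by simp
      then have "0 < xb n + xd n" using xpos by (simp add: add_pos_pos)
      then show ?thesis using n by (intro exI[of _ n]) (auto simp: dist_real_def)
    qed
    then show ?thesis using that e by blast
  qed
  have desc: "\<exists>t\<ge>1. Hf t \<le> Hf 1 - real n * (gam * eta / 4)" for n :: nat
  proof (induction n)
    case 0
    then show ?case by (intro exI[of _ 1]) simp
  next
    case (Suc n)
    then obtain t where t: "1 \<le> t" "Hf t \<le> Hf 1 - real n * (gam * eta / 4)" by blast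
    obtain t' where t': "t' \<ge> t" "1 \<le> t'" "eta \<le> xb t' + xd t'" using fr by blast
    have "Hf (t' + 1/2) \<le> Hf t' - gam * eta / 4" by (rule H_drop[OF t'(2) eta t'(3)])
    moreover have "Hf t' \<le> Hf t" by (rule H_mono[OF t(1) t'(1)])
    moreover have "real (Suc n) * (gam * eta / 4) = real n * (gam * eta / 4) + gam * eta / 4"
      by (simp add: algebra_simps)
    ultimately have "Hf (t' + 1/2) \<le> Hf 1 - real (Suc n) * (gam * eta / 4)"
      using t(2) by linarith
    moreover have "1 \<le> t' + 1/2" using t' by simp
    ultimately show ?case by blast
  qed
  have pos: "0 < gam * eta / 4" using gam_pos eta by simp
  obtain n :: nat where n: "Hf 1 - (- La * ln Mx - Lc * ln Mx) < real n * (gam * eta / 4)"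
    using ex_less_of_nat_mult[OF pos] by blast
  obtain t where t: "1 \<le> t" "Hf t \<le> Hf 1 - real n * (gam * eta / 4)" using desc by blast
  show False using H_lower[OF t(1)] t(2) n by linarith
qed

lemma lim_xb: "(xb \<longlongrightarrow> 0) at_top"
proof (rule Lim_null_comparison[OF _ G_lim])
  show "\<forall>\<^sub>F t in at_top. norm (xb t) \<le> xb t + xd t"
  proof (rule eventually_mono[OF eventually_gt_at_top[of 0]])
    fix x :: real assume "0 < x"
    then have "0 < xb x" "0 < xd x" using xpos by auto
    then show "norm (xb x) \<le> xb x + xd x" by simp
  qed
qed

lemma lim_xd: "(xd \<longlongrightarrow> 0) at_top"
proof (rule Lim_null_comparison[OF _ G_lim])
  show "\<forall>\<^sub>F t in at_top. norm (xd t) \<le> xb t + xd t"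
  proof (rule eventually_mono[OF eventually_gt_at_top[of 0]])
    fix x :: real assume "0 < x"
    then have "0 < xb x" "0 < xd x" using xpos by auto
    then show "norm (xd x) \<le> xb x + xd x" by simp
  qed
qed

lemma lim_xa: "(xa \<longlongrightarrow> 1) at_top"
proof -
  have "((\<lambda>t. (xa t + xb t) - xb t) \<longlongrightarrow> 1 - 0) at_top"
    by (intro tendsto_diff lim_ab lim_xb)
  then show ?thesis by simp
qed

lemma lim_xc: "(xc \<longlongrightarrow> 1) at_top"
proof -
  have "((\<lambda>t. (xc t + xd t) - xd t) \<longlongrightarrow> 1 - 0) at_top"
    by (intro tendsto_diff lim_cd lim_xd)
  then show ?thesis by simp
qed

end

context wsys begin

lemma phi'_at_zero:
  assumes t: "0 < t" and z: "phi t = 0"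
  shows "phi' t = (1/Lb - 1/La) / (xa t / La + xb t / Lb) + (1/Lc - 1/Ld) / (xc t / Lc + xd t / Ld)"
proof -
  note e = phi_zero[OF t z]
  have s1a: "0 < xa t / La + xb t / Lb" by (intro add_pos_pos divide_pos_pos) (use xpos[OF t] Lpos in auto)
  have s1b: "0 < xc t / Lc + xd t / Ld" by (intro add_pos_pos divide_pos_pos) (use xpos[OF t] Lpos in auto)
  note s1 = s1a s1b
  have "da t * (xa t / La + xb t / Lb) = 1" using flow1[OF t] e by (simp add: algebra_simps)
  then have da: "da t = 1 / (xa t / La + xb t / Lb)" using s1 by (simp add: field_simps)
  have "dc t * (xc t / Lc + xd t / Ld) = 1" using flow2[OF t] e by (simp add: algebra_simps)
  then have dc: "dc t = 1 / (xc t / Lc + xd t / Ld)" using s1 by (simp add: field_simps)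
  have "phi' t = da t * (1/Lb - 1/La) + dc t * (1/Lc - 1/Ld)"
    unfolding phi'_def using e by (simp add: algebra_simps)
  then show ?thesis unfolding da dc by simp
qed

lemma ev_phi_de:
  "((\<forall>\<^sub>F t in at_top. phi t > 0) \<longrightarrow> (\<forall>\<^sub>F t in at_top. de t > 0)) \<and>
   ((\<forall>\<^sub>F t in at_top. phi t < 0) \<longrightarrow> (\<forall>\<^sub>F t in at_top. de t < 0))"
proof (intro conjI impI)
  have ev0: "\<forall>\<^sub>F t in at_top. (0::real) < t" by (rule eventually_gt_at_top)
  assume "\<forall>\<^sub>F t in at_top. phi t > 0"
  with ev0 show "\<forall>\<^sub>F t in at_top. de t > 0" by eventually_elim (use phi_sign in blast)
next
  have ev0: "\<forall>\<^sub>F t in at_top. (0::real) < t" by (rule eventually_gt_at_top)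
  assume "\<forall>\<^sub>F t in at_top. phi t < 0"
  with ev0 show "\<forall>\<^sub>F t in at_top. de t < 0" by eventually_elim (use phi_sign in blast)
qed

lemma de_bound:
  assumes t: "0 < t" shows "\<bar>de t\<bar> \<le> P t * \<bar>exp (phi t) - 1\<bar>"
proof -
  define G where "G = (xb t / Lb) * (xc t / Lc)"
  define H where "H = (xa t / La) * (xd t / Ld)"
  have G0: "0 < G" unfolding G_def using xpos[OF t] Lpos by simp
  have H0: "0 < H" unfolding H_def using xpos[OF t] Lpos by simp
  have g1: "ln G = ln (xb t / Lb) + ln (xc t / Lc)" unfolding G_def
    by (rule ln_mult_pos) (use xpos[OF t] Lpos in simp_all)
  have h1: "ln H = ln (xa t / La) + ln (xd t / Ld)" unfolding H_def
    by (rule ln_mult_pos) (use xpos[OF t] Lpos in simp_all)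
  have ph: "phi t = ln G - ln H" unfolding phi_def g1 h1 by simp
  have ex: "exp (phi t) = G / H" unfolding ph exp_diff using G0 H0 by simp
  have P0: "0 < P t" using Pac[OF t] dpos[OF t] by simp
  have deG: "de t = P t * w t * (G - H)" unfolding G_def H_def using de_form[OF t] by (simp add: algebra_simps)
  have GH: "G = H * exp (phi t)" unfolding ex using H0 by simp
  have de: "de t = P t * w t * H * (exp (phi t) - 1)" unfolding deG GH by (simp add: algebra_simps)
  have Hle: "H \<le> (xb t / Lb + xd t / Ld) * (xa t / La + xc t / Lc)"
    unfolding H_def using xpos[OF t] Lpos
    by (subst mult.commute, intro mult_mono) auto
  have wH: "w t * H \<le> 1"
    using mult_left_mono[OF Hle less_imp_le[OF wpos[OF t]]] wbound[OF t] by simp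
  have "\<bar>de t\<bar> = P t * \<bar>exp (phi t) - 1\<bar> * (w t * H)"
    unfolding de using P0 wpos[OF t] H0 by (simp add: abs_mult)
  also have "\<dots> \<le> P t * \<bar>exp (phi t) - 1\<bar> * 1"
    by (rule mult_left_mono[OF wH]) (use P0 in simp)
  finally show ?thesis by simp
qed

end

context wsysB begin

lemma caseB_generic:
  assumes lam: "La / Lb - Lc / Ld \<noteq> 0"
  shows "(\<forall>\<^sub>F t in at_top. de t > 0) \<or> (\<forall>\<^sub>F t in at_top. de t < 0)"
proof -
  define h where "h = (\<lambda>t. (1/Lb - 1/La) / (xa t / La + xb t / Lb) + (1/Lc - 1/Ld) / (xc t / Lc + xd t / Ld))"
  have "(h \<longlongrightarrow> (1/Lb - 1/La) / (1 / La + 0 / Lb) + (1/Lc - 1/Ld) / (1 / Lc + 0 / Ld)) at_top"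
    unfolding h_def using Lpos by (intro tendsto_intros lim_xa lim_xb lim_xc lim_xd) simp_all
  moreover have "(1/Lb - 1/La) / (1 / La + 0 / Lb) + (1/Lc - 1/Ld) / (1 / Lc + 0 / Ld) = La / Lb - Lc / Ld"
    using Lpos by (simp add: field_simps)
  ultimately have hl: "(h \<longlongrightarrow> La / Lb - Lc / Ld) at_top" by simp
  have hz: "phi' t = h t" if "0 < t" "phi t = 0" for t
    using phi'_at_zero[OF that] unfolding h_def by simp
  show ?thesis
  proof (cases "La / Lb - Lc / Ld > 0")
    case True
    have "\<forall>\<^sub>F t in at_top. 0 < h t" by (rule order_tendstoD(1)[OF hl True])
    then obtain N where N: "\<And>t. t \<ge> N \<Longrightarrow> 0 < h t" unfolding eventually_at_top_linorder by blast
    show ?thesis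
    proof (rule phi_stab[of "max N 1"])
      show "(\<forall>t\<ge>max N 1. phi t = 0 \<longrightarrow> phi' t < 0) \<or> (\<forall>t\<ge>max N 1. phi t = 0 \<longrightarrow> phi' t > 0)"
        using N hz by auto
    qed simp
  next
    case False
    then have neg: "La / Lb - Lc / Ld < 0" using lam by simp
    have "\<forall>\<^sub>F t in at_top. h t < 0" by (rule order_tendstoD(2)[OF hl neg])
    then obtain N where N: "\<And>t. t \<ge> N \<Longrightarrow> h t < 0" unfolding eventually_at_top_linorder by blast
    show ?thesis
    proof (rule phi_stab[of "max N 1"])
      show "(\<forall>t\<ge>max N 1. phi t = 0 \<longrightarrow> phi' t < 0) \<or> (\<forall>t\<ge>max N 1. phi t = 0 \<longrightarrow> phi' t > 0)"
        using N hz by auto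
    qed simp
  qed
qed

end

context wsysB begin

lemma caseB_nongeneric:
  assumes lam: "La / Lb - Lc / Ld = 0"
  shows "(\<forall>\<^sub>F t in at_top. de t > 0) \<or> (\<forall>\<^sub>F t in at_top. de t < 0) \<or> ((\<lambda>t. \<bar>de t\<bar>) \<longlongrightarrow> 0) at_top"
proof -
  have LL: "La * Ld = Lb * Lc" using lam Lpos by (simp add: field_simps)
  define kY where "kY = (1 / Lb) * (1 + La / Lc)"
  have kY: "0 < kY" unfolding kY_def using Lpos by (intro mult_pos_pos add_pos_pos divide_pos_pos) auto
  define Y where "Y = (\<lambda>t. ln (xb t) - ln (xd t) - (La / Lb) * (ln (xa t) - ln (xc t)))"
  define aa where "aa = (\<lambda>t. (1 - La / Lb) * (ln (xa t) - ln (xc t)))"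
  have Yder: "(Y has_real_derivative - kY * de t) (at t)" if t: "0 < t" for t
  proof -
    have "(Y has_real_derivative (db t / Lb - 1) - (dd t / Ld - 1) - (La / Lb) * ((da t / La - 1) - (dc t / Lc - 1))) (at t)"
      unfolding Y_def by (intro DERIV_diff DERIV_cmult ln_der2 dxa dxb dxc dxd xpos t)
    moreover have "(db t / Lb - 1) - (dd t / Ld - 1) - (La / Lb) * ((da t / La - 1) - (dc t / Lc - 1)) = - kY * de t"
    proof -
      have Ld: "Ld = Lb * Lc / La" using LL Lpos by (simp add: field_simps)
      have dd: "dd t = dc t + da t - db t" using Pac[OF t] Pbd[OF t] by simp
      show ?thesis unfolding kY_def Ld dd de_eq[OF t] using Lpos by (simp add: field_simps)
    qed
    ultimately show ?thesis by simp
  qed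
  have phiY: "phi t = Y t - aa t" if t: "0 < t" for t
  proof -
    note xp = xpos[OF t]
    have "phi t = (ln (xb t) - ln Lb) + (ln (xc t) - ln Lc) - (ln (xa t) - ln La) - (ln (xd t) - ln Ld)"
      unfolding phi_def using xp Lpos by (simp add: ln_div)
    moreover have "ln La + ln Ld = ln Lb + ln Lc"
      using LL Lpos by (metis ln_mult_pos)
    ultimately show ?thesis unfolding Y_def aa_def by (simp add: algebra_simps)
  qed
  have aal: "(aa \<longlongrightarrow> 0) at_top"
  proof -
    have "(aa \<longlongrightarrow> (1 - La / Lb) * (ln 1 - ln 1)) at_top"
      unfolding aa_def by (intro tendsto_intros lim_xa lim_xc) simp_all
    then show ?thesis by simp
  qed
  consider (p) "\<forall>\<^sub>F t in at_top. phi t > 0" | (n) "\<forall>\<^sub>F t in at_top. phi t < 0"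
    | (o) "\<not> (\<forall>\<^sub>F t in at_top. phi t > 0)" "\<not> (\<forall>\<^sub>F t in at_top. phi t < 0)" by blast
  then show ?thesis
  proof cases
    case p then show ?thesis using ev_phi_de by blast
  next
    case n then show ?thesis using ev_phi_de by blast
  next
    case o
    have Yl: "(Y \<longlongrightarrow> 0) at_top"
      unfolding tendsto_iff
    proof (intro allI impI)
      fix eta :: real assume eta: "0 < eta"
      have "\<forall>\<^sub>F t in at_top. dist (aa t) 0 < eta" using aal eta unfolding tendsto_iff by blast
      then obtain N1 where N1: "\<And>t. t \<ge> N1 \<Longrightarrow> \<bar>aa t\<bar> < eta"
        unfolding eventually_at_top_linorder dist_real_def by auto
      define T1 where "T1 = max N1 1"
      have T1: "0 < T1" "\<And>t. t \<ge> T1 \<Longrightarrow> \<bar>aa t\<bar> < eta" "\<And>t. t \<ge> T1 \<Longrightarrow> 0 < t"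
        unfolding T1_def using N1 by auto
      obtain t1 where t1: "t1 \<ge> T1" "phi t1 \<le> 0"
        using o(1) unfolding eventually_at_top_linorder by (auto simp: not_less)
      obtain t2 where t2: "t2 \<ge> T1" "phi t2 \<ge> 0"
        using o(2) unfolding eventually_at_top_linorder by (auto simp: not_less)
      have up: "\<forall>s>t1. Y s - eta < 0"
      proof (rule barrier_core[OF T1(1), where f' = "\<lambda>s. - kY * de s"])
        fix s assume s: "T1 \<le> s"
        show "((\<lambda>s. Y s - eta) has_real_derivative - kY * de s) (at s)"
          using DERIV_diff[OF Yder[OF T1(3)[OF s]] DERIV_const] by simp
      next
        fix s assume s: "T1 \<le> s" "Y s - eta = 0"
        have "phi s > 0" using phiY[OF T1(3)[OF s(1)]] s T1(2)[OF s(1)] by auto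
        then have "de s > 0" using phi_sign[OF T1(3)[OF s(1)]] by blast
        then show "- kY * de s < 0" using kY by simp
      next
        show "T1 \<le> t1" by (rule t1(1))
        show "Y t1 - eta \<le> 0" using phiY[OF T1(3)[OF t1(1)]] t1 T1(2)[OF t1(1)] by auto
      qed
      have down: "\<forall>s>t2. - Y s - eta < 0"
      proof (rule barrier_core[OF T1(1), where f' = "\<lambda>s. kY * de s"])
        fix s assume s: "T1 \<le> s"
        show "((\<lambda>s. - Y s - eta) has_real_derivative kY * de s) (at s)"
          using DERIV_diff[OF DERIV_minus[OF Yder[OF T1(3)[OF s]]] DERIV_const] by simp
      next
        fix s assume s: "T1 \<le> s" "- Y s - eta = 0"
        have "phi s < 0" using phiY[OF T1(3)[OF s(1)]] s T1(2)[OF s(1)] by auto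
        then have "de s < 0" using phi_sign[OF T1(3)[OF s(1)]] by blast
        then show "kY * de s < 0" using kY by (simp add: mult_pos_neg)
      next
        show "T1 \<le> t2" by (rule t2(1))
        show "- Y t2 - eta \<le> 0" using phiY[OF T1(3)[OF t2(1)]] t2 T1(2)[OF t2(1)] by auto
      qed
      show "\<forall>\<^sub>F t in at_top. dist (Y t) 0 < eta"
        unfolding eventually_at_top_linorder
      proof (intro exI[of _ "max t1 t2 + 1"] allI impI)
        fix s assume "max t1 t2 + 1 \<le> s"
        then have "s > t1" "s > t2" by auto
        then have "Y s < eta" "- Y s < eta" using up down by auto
        then show "dist (Y s) 0 < eta" by (auto simp: dist_real_def)
      qed
    qed
    have phil: "(phi \<longlongrightarrow> 0) at_top"
    proof -
      have "((\<lambda>t. Y t - aa t) \<longlongrightarrow> 0 - 0) at_top" by (intro tendsto_diff Yl aal)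
      moreover have "\<forall>\<^sub>F t in at_top. Y t - aa t = phi t"
        by (rule eventually_mono[OF eventually_gt_at_top[of 0]]) (simp add: phiY)
      ultimately show ?thesis by (simp add: Lim_transform_eventually)
    qed
    have xa2: "\<forall>\<^sub>F t in at_top. 1/2 < xa t" by (rule order_tendstoD(1)[OF lim_xa]) simp
    have xc2: "\<forall>\<^sub>F t in at_top. 1/2 < xc t" by (rule order_tendstoD(1)[OF lim_xc]) simp
    have bnd: "\<forall>\<^sub>F t in at_top. norm (de t) \<le> 2 * (La + Lc) * \<bar>exp (phi t) - 1\<bar>"
      using xa2 xc2 eventually_gt_at_top[of 0]
    proof eventually_elim
      case (elim t)
      then have t: "0 < t" by simp
      have qa: "xa t * da t \<le> La" using qle(1)[OF t] Lpos by (simp add: field_simps)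
      have qc: "xc t * dc t \<le> Lc" using qle(3)[OF t] Lpos by (simp add: field_simps)
      have "da t * (1/2) < da t * xa t" using elim dpos[OF t] by (intro mult_strict_left_mono) auto
      then have da: "da t \<le> 2 * La" using qa by (simp add: mult.commute)
      have "dc t * (1/2) < dc t * xc t" using elim dpos[OF t] by (intro mult_strict_left_mono) auto
      then have dc: "dc t \<le> 2 * Lc" using qc by (simp add: mult.commute)
      have P: "P t \<le> 2 * (La + Lc)" using Pac[OF t] da dc by simp
      have "\<bar>de t\<bar> \<le> P t * \<bar>exp (phi t) - 1\<bar>" by (rule de_bound[OF t])
      also have "\<dots> \<le> 2 * (La + Lc) * \<bar>exp (phi t) - 1\<bar>" by (rule mult_right_mono[OF P]) simp
      finally show ?case by simp
    qed
    have "((\<lambda>t. 2 * (La + Lc) * \<bar>exp (phi t) - 1\<bar>) \<longlongrightarrow> 2 * (La + Lc) * \<bar>exp 0 - 1\<bar>) at_top"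
      by (intro tendsto_intros phil)
    then have "((\<lambda>t. 2 * (La + Lc) * \<bar>exp (phi t) - 1\<bar>) \<longlongrightarrow> 0) at_top" by simp
    from Lim_null_comparison[OF bnd this] have "(de \<longlongrightarrow> 0) at_top" .
    then show ?thesis using tendsto_rabs_zero by blast
  qed
qed

lemma caseB:
  "(\<forall>\<^sub>F t in at_top. de t > 0) \<or> (\<forall>\<^sub>F t in at_top. de t < 0) \<or> ((\<lambda>t. \<bar>de t\<bar>) \<longlongrightarrow> 0) at_top"
  using caseB_generic caseB_nongeneric by blast

end

context wsys begin
lemma main_AB:
  assumes "(La \<le> Lb \<and> Ld \<le> Lc \<and> (La < Lb \<or> Ld < Lc)) \<or> (La < Lb \<and> Lc < Ld)"
  shows "(\<forall>\<^sub>F t in at_top. de t > 0) \<or> (\<forall>\<^sub>F t in at_top. de t < 0) \<or> ((\<lambda>t. \<bar>de t\<bar>) \<longlongrightarrow> 0) at_top"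
proof (cases "La < Lb \<and> Lc < Ld")
  case False
  then have "La \<le> Lb" "Ld \<le> Lc" "La < Lb \<or> Ld < Lc" using assms by auto
  then show ?thesis using caseA by blast
next
  case True
  then have "wsysB La Lb Lc Ld xa xb xc xd da db dc dd de P w"
    using wsys_axioms by (simp add: wsysB_def wsysB_axioms_def)
  then show ?thesis by (rule wsysB.caseB)
qed
end

lemma deriv_at_from_within:
  fixes f :: "real \<Rightarrow> real"
  assumes "(f has_real_derivative d) (at s within {0..})" "0 < s"
  shows "(f has_real_derivative d) (at s)"
proof -
  have "(f has_real_derivative d) (at s within {0<..})" by (rule DERIV_subset[OF assms(1)]) auto
  moreover have "at s within {0<..} = at s" by (rule at_within_open) (use assms in auto)
  ultimately show ?thesis by simp
qed

lemma pos_from_within: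
  fixes f :: "real \<Rightarrow> real"
  assumes der: "\<And>s. 0 \<le> s \<Longrightarrow> (f has_real_derivative g s - f s) (at s within {0..})"
    and g: "\<And>s. 0 \<le> s \<Longrightarrow> 0 \<le> g s" and f0: "0 < f 0" and t: "0 \<le> t"
  shows "0 < f t"
proof -
  define h where "h = (\<lambda>s. exp s * f s)"
  have hder: "(h has_real_derivative exp s * f s + (g s - f s) * exp s) (at s within {0..})" if "0 \<le> s" for s
    unfolding h_def by (rule DERIV_mult[OF has_field_derivative_at_within[OF DERIV_exp] der[OF that]])
  have "h 0 \<le> h t"
  proof (rule DERIV_nonneg_imp_increasing_open[OF t])
    fix x assume x: "0 < x" "x < t"
    have "(h has_real_derivative exp x * f x + (g x - f x) * exp x) (at x)"
      by (rule deriv_at_from_within[OF hder]) (use x in auto)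
    moreover have "0 \<le> exp x * f x + (g x - f x) * exp x"
      using g[of x] x by (simp add: algebra_simps)
    ultimately show "\<exists>y. (h has_real_derivative y) (at x) \<and> 0 \<le> y" by blast
  next
    have "continuous (at s within {0..}) h" if "0 \<le> s" for s
      using hder[OF that] by (rule DERIV_continuous)
    then have "continuous_on {0..} h" by (simp add: continuous_on_eq_continuous_within)
    then show "continuous_on {0..t} h" by (rule continuous_on_subset) auto
  qed
  then have "exp 0 * f 0 \<le> exp t * f t" unfolding h_def .
  then have "0 < exp t * f t" using f0 by simp
  then show ?thesis by (simp add: zero_less_mult_iff)
qed

lemma sum_wedges: "(\<Sum>x\<in>{x\<in>wedges. Q x}. f x) =
   (if Q Ea then f Ea else 0) + (if Q Eb then f Eb else 0) + (if Q Ec then f Ec else 0)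
   + (if Q Ed then f Ed else 0) + (if Q Ee then f Ee else 0)"
  unfolding wedges_def by (subst sum.inter_filter) (auto simp: add.assoc)

lemma kirch_alg:
  fixes ga gb gc gd ge p0 p1 pl pr :: real
  assumes pos: "0 < ga" "0 < gb" "0 < gc" "0 < gd" "0 < ge"
    and E1: "ga * (p0 - pr) + gb * (p0 - pl) = 1"
    and E3: "gd * (pl - p1) + ge * (pl - pr) - gb * (p0 - pl) = 0"
    and E4: "gc * (pr - p1) - ga * (p0 - pr) - ge * (pl - pr) = 0"
  shows "0 < p0 - pr" "0 < p0 - pl" "0 < pr - p1" "0 < pl - p1"
    "gc * (pr - p1) + gd * (pl - p1) = 1"
    "(pl - pr) * ((gb + gd + ge) * (ga + gc + ge) - ge\<^sup>2) = (p0 - p1) * (gb * gc - ga * gd)"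
    "(gb + gd) * (ga + gc) \<le> (gb + gd + ge) * (ga + gc + ge) - ge\<^sup>2"
    "ga * (p0 - pr)\<^sup>2 + gb * (p0 - pl)\<^sup>2 + gc * (pr - p1)\<^sup>2 + gd * (pl - p1)\<^sup>2 \<le> p0 - p1"
proof -
  define X where "X = p0 - p1"
  define u where "u = pl - p1"
  define v where "v = pr - p1"
  define Dt where "Dt = (gb + gd + ge) * (ga + gc + ge) - ge\<^sup>2"
  have DtE: "Dt = (gb + gd) * (ga + gc) + ge * (ga + gb + gc + gd)" unfolding Dt_def by (simp add: algebra_simps power2_eq_square)
  have Dt0: "0 < Dt" unfolding DtE using pos by (intro add_pos_pos mult_pos_pos) auto
  have e3: "(gb + gd + ge) * u - ge * v - gb * X = 0" using E3 unfolding u_def v_def X_def by (simp add: algebra_simps)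
  have e4: "- ge * u + (ga + gc + ge) * v - ga * X = 0" using E4 unfolding u_def v_def X_def by (simp add: algebra_simps)
  have "(ga + gc + ge) * ((gb + gd + ge) * u - ge * v - gb * X) + ge * (- ge * u + (ga + gc + ge) * v - ga * X) = 0"
    using e3 e4 by simp
  then have U: "Dt * u = X * (gb * (ga + gc + ge) + ge * ga)" unfolding Dt_def by (simp add: algebra_simps power2_eq_square)
  have "ge * ((gb + gd + ge) * u - ge * v - gb * X) + (gb + gd + ge) * (- ge * u + (ga + gc + ge) * v - ga * X) = 0"
    using e3 e4 by simp
  then have V: "Dt * v = X * (ga * (gb + gd + ge) + ge * gb)" unfolding Dt_def by (simp add: algebra_simps power2_eq_square)
  have A: "Dt * (X - v) = X * (gc * (gb + gd + ge) + ge * gd)" using V unfolding Dt_def by (simp add: algebra_simps power2_eq_square)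
  have B: "Dt * (X - u) = X * (gd * (ga + gc + ge) + ge * gc)" using U unfolding Dt_def by (simp add: algebra_simps power2_eq_square)
  have e1: "ga * (X - v) + gb * (X - u) = 1" using E1 unfolding u_def v_def X_def by (simp add: algebra_simps)
  have "ga * (Dt * (X - v)) + gb * (Dt * (X - u)) = Dt * (ga * (X - v) + gb * (X - u))"
    by (simp add: algebra_simps)
  then have "Dt = ga * (Dt * (X - v)) + gb * (Dt * (X - u))" using e1 by simp
  also have "\<dots> = ga * (X * (gc * (gb + gd + ge) + ge * gd)) + gb * (X * (gd * (ga + gc + ge) + ge * gc))"
    unfolding A B ..
  also have "\<dots> = X * (ga * (gc * (gb + gd + ge) + ge * gd) + gb * (gd * (ga + gc + ge) + ge * gc))"
    by (simp add: algebra_simps)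
  finally have XDt: "Dt = X * (ga * (gc * (gb + gd + ge) + ge * gd) + gb * (gd * (ga + gc + ge) + ge * gc))" .
  have Npos: "0 < ga * (gc * (gb + gd + ge) + ge * gd) + gb * (gd * (ga + gc + ge) + ge * gc)"
    using pos by (intro add_pos_pos mult_pos_pos) auto
  have X0: "0 < X" using XDt Dt0 Npos by (metis zero_less_mult_pos2)
  have n1: "0 < X * (gb * (ga + gc + ge) + ge * ga)" using X0 pos by (intro mult_pos_pos add_pos_pos) auto
  have n2: "0 < X * (ga * (gb + gd + ge) + ge * gb)" using X0 pos by (intro mult_pos_pos add_pos_pos) auto
  have n3: "0 < X * (gc * (gb + gd + ge) + ge * gd)" using X0 pos by (intro mult_pos_pos add_pos_pos) auto
  have n4: "0 < X * (gd * (ga + gc + ge) + ge * gc)" using X0 pos by (intro mult_pos_pos add_pos_pos) auto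
  have "0 < u" using U n1 Dt0 by (metis zero_less_mult_pos)
  then show "0 < pl - p1" unfolding u_def .
  have "0 < v" using V n2 Dt0 by (metis zero_less_mult_pos)
  then show "0 < pr - p1" unfolding v_def .
  have "0 < X - v" using A n3 Dt0 by (metis zero_less_mult_pos)
  then show "0 < p0 - pr" unfolding X_def v_def by simp
  have "0 < X - u" using B n4 Dt0 by (metis zero_less_mult_pos)
  then show "0 < p0 - pl" unfolding X_def u_def by simp
  show E2: "gc * (pr - p1) + gd * (pl - p1) = 1" using E1 E3 E4 by (simp add: algebra_simps)
  have "(u - v) * Dt = X * (gb * gc - ga * gd)"
    using U V by (simp add: algebra_simps)
  then show "(pl - pr) * ((gb + gd + ge) * (ga + gc + ge) - ge\<^sup>2) = (p0 - p1) * (gb * gc - ga * gd)"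
    unfolding u_def v_def X_def Dt_def by simp
  show "(gb + gd) * (ga + gc) \<le> (gb + gd + ge) * (ga + gc + ge) - ge\<^sup>2"
    using DtE pos unfolding Dt_def by simp
  have tel: "ga * (p0 - pr)\<^sup>2 + gb * (p0 - pl)\<^sup>2 + gc * (pr - p1)\<^sup>2 + gd * (pl - p1)\<^sup>2 + ge * (pl - pr)\<^sup>2
      = p0 * (ga * (p0 - pr) + gb * (p0 - pl)) + pl * (gd * (pl - p1) + ge * (pl - pr) - gb * (p0 - pl))
        + pr * (gc * (pr - p1) - ga * (p0 - pr) - ge * (pl - pr)) - p1 * (gc * (pr - p1) + gd * (pl - p1))"
    by (simp add: algebra_simps power2_eq_square)
  have "0 \<le> ge * (pl - pr)\<^sup>2" using pos by simp
  then show "ga * (p0 - pr)\<^sup>2 + gb * (p0 - pl)\<^sup>2 + gc * (pr - p1)\<^sup>2 + gd * (pl - p1)\<^sup>2 \<le> p0 - p1"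
    using tel E1 E2 E3 E4 by simp
qed

lemma kir_eqs:
  assumes "kirchhoff L Dv pv"
  shows "current L Dv pv Ea + current L Dv pv Eb = 1"
    "current L Dv pv Ed + current L Dv pv Ee - current L Dv pv Eb = 0"
    "current L Dv pv Ec - (current L Dv pv Ea + current L Dv pv Ee) = 0"
proof -
  have k: "\<And>v. (\<Sum>x\<in>{x\<in>wedges. fst (ends x) = v}. current L Dv pv x)
          - (\<Sum>x\<in>{x\<in>wedges. snd (ends x) = v}. current L Dv pv x) = net_supply v"
    using assms unfolding kirchhoff_def by blast
  show "current L Dv pv Ea + current L Dv pv Eb = 1"
    using k[of S0] unfolding sum_wedges by (simp add: net_supply_def)
  show "current L Dv pv Ed + current L Dv pv Ee - current L Dv pv Eb = 0"
    using k[of Lv] unfolding sum_wedges by (simp add: net_supply_def)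
  show "current L Dv pv Ec - (current L Dv pv Ea + current L Dv pv Ee) = 0"
    using k[of Rv] unfolding sum_wedges by (simp add: net_supply_def)
qed

lemma no_tie:
  assumes "unique_shortest_path L" "L Ea = L Eb" "L Ec = L Ed"
  shows False
proof -
  have len: "length (path_lengths L) = 4" by (simp add: path_lengths_def)
  obtain i where i0: "i < length (path_lengths L)"
    and H0: "\<forall>j < length (path_lengths L). j \<noteq> i \<longrightarrow> path_lengths L ! i < path_lengths L ! j"
    using assms(1) unfolding unique_shortest_path_def by blast
  have i: "i < 4" using i0 len by simp
  have H: "\<And>j. j < 4 \<Longrightarrow> j \<noteq> i \<Longrightarrow> path_lengths L ! i < path_lengths L ! j"
    using H0 len by simp
  have "i = 0 \<or> i = 1 \<or> i = 2 \<or> i = 3" using i by auto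
  then show False
  proof (elim disjE)
    assume "i = 0" then show False using H[of 1] assms(2,3) by (simp add: path_lengths_def)
  next
    assume "i = 1" then show False using H[of 0] assms(2,3) by (simp add: path_lengths_def)
  next
    assume "i = 2" then show False using H[of 3] assms(2,3) by (simp add: path_lengths_def)
  next
    assume "i = 3" then show False using H[of 2] assms(2,3) by (simp add: path_lengths_def)
  qed
qed

theorem mainTheorem15:
  fixes L :: "wedge \<Rightarrow> real"
    and D :: "real \<Rightarrow> wedge \<Rightarrow> real"
    and p :: "real \<Rightarrow> wvertex \<Rightarrow> real"
  assumes "\<forall>x\<in>wedges. L x > 0"
    and "\<forall>x\<in>wedges. D 0 x > 0"
    and "unique_shortest_path L"
    and "physarum_solution L D p"
  shows "\<forall>x\<in>wedges. becomes_horizontal p x \<or> becomes_directed p x"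
proof -
  have Lp: "0 < L Ea" "0 < L Eb" "0 < L Ec" "0 < L Ed" "0 < L Ee"
    using assms(1) unfolding wedges_def by auto
  have kir: "\<And>t. 0 \<le> t \<Longrightarrow> kirchhoff L (D t) (p t)"
    using assms(4) unfolding physarum_solution_def by blast
  have der: "\<And>x t. x \<in> wedges \<Longrightarrow> 0 \<le> t \<Longrightarrow>
      ((\<lambda>s. D s x) has_real_derivative (\<bar>current L (D t) (p t) x\<bar> - D t x)) (at t within {0..})"
    using assms(4) unfolding physarum_solution_def by blast
  have Dpos: "0 < D t x" if x: "x \<in> wedges" and t: "0 \<le> t" for x t
    by (rule pos_from_within[where g = "\<lambda>s. \<bar>current L (D s) (p s) x\<bar>", OF der[OF x] _ _ t])
       (use assms(2) x in auto)
  have inW: "Ea \<in> wedges" "Eb \<in> wedges" "Ec \<in> wedges" "Ed \<in> wedges" "Ee \<in> wedges"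
    unfolding wedges_def by auto
  define g where "g = (\<lambda>x t. D t x / L x)"
  have gpos: "0 < g x t" if "x \<in> wedges" "0 \<le> t" for x t
    unfolding g_def using Dpos[OF that] assms(1) that(1) by simp
  have cur: "current L (D t) (p t) x = g x t * (p t (fst (ends x)) - p t (snd (ends x)))"
    if "x \<in> wedges" "0 \<le> t" for x t
    unfolding current_def g_def using Dpos[OF that] assms(1) that(1) by (simp add: field_simps)
  define w where "w = (\<lambda>t. 1 / ((g Eb t + g Ed t + g Ee t) * (g Ea t + g Ec t + g Ee t) - (g Ee t)\<^sup>2))"
  have alg: "0 < p t S0 - p t Rv \<and> 0 < p t S0 - p t Lv \<and> 0 < p t Rv - p t S1 \<and> 0 < p t Lv - p t S1
    \<and> g Ea t * (p t S0 - p t Rv) + g Eb t * (p t S0 - p t Lv) = 1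
    \<and> g Ec t * (p t Rv - p t S1) + g Ed t * (p t Lv - p t S1) = 1
    \<and> (p t Lv - p t Rv) * ((g Eb t + g Ed t + g Ee t) * (g Ea t + g Ec t + g Ee t) - (g Ee t)\<^sup>2)
        = (p t S0 - p t S1) * (g Eb t * g Ec t - g Ea t * g Ed t)
    \<and> (g Eb t + g Ed t) * (g Ea t + g Ec t) \<le> (g Eb t + g Ed t + g Ee t) * (g Ea t + g Ec t + g Ee t) - (g Ee t)\<^sup>2
    \<and> g Ea t * (p t S0 - p t Rv)\<^sup>2 + g Eb t * (p t S0 - p t Lv)\<^sup>2 + g Ec t * (p t Rv - p t S1)\<^sup>2
        + g Ed t * (p t Lv - p t S1)\<^sup>2 \<le> p t S0 - p t S1"
    if t: "0 \<le> t" for t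
  proof -
    note ke = kir_eqs[OF kir[OF t]]
    note c = cur[OF inW(1) t] cur[OF inW(2) t] cur[OF inW(3) t] cur[OF inW(4) t] cur[OF inW(5) t]
    have E1: "g Ea t * (p t S0 - p t Rv) + g Eb t * (p t S0 - p t Lv) = 1" using ke(1) c by simp
    have E3: "g Ed t * (p t Lv - p t S1) + g Ee t * (p t Lv - p t Rv) - g Eb t * (p t S0 - p t Lv) = 0"
      using ke(2) c by simp
    have E4: "g Ec t * (p t Rv - p t S1) - g Ea t * (p t S0 - p t Rv) - g Ee t * (p t Lv - p t Rv) = 0"
      using ke(3) c by simp
    note r = kirch_alg[OF gpos[OF inW(1) t] gpos[OF inW(2) t] gpos[OF inW(3) t] gpos[OF inW(4) t]
        gpos[OF inW(5) t] E1 E3 E4]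
    show ?thesis using r E1 by simp
  qed
  let ?xa = "\<lambda>t. D t Ea" and ?xb = "\<lambda>t. D t Eb" and ?xc = "\<lambda>t. D t Ec" and ?xd = "\<lambda>t. D t Ed"
  let ?da = "\<lambda>t. p t S0 - p t Rv" and ?db = "\<lambda>t. p t S0 - p t Lv"
  let ?dc = "\<lambda>t. p t Rv - p t S1" and ?dd = "\<lambda>t. p t Lv - p t S1"
  let ?de = "\<lambda>t. p t Lv - p t Rv" and ?P = "\<lambda>t. p t S0 - p t S1"
  have gdef: "\<And>x t. g x t = D t x / L x" unfolding g_def by simp
  have F1: "\<And>t. 0 < t \<Longrightarrow> 0 < D t Ea" "\<And>t. 0 < t \<Longrightarrow> 0 < D t Eb"
     "\<And>t. 0 < t \<Longrightarrow> 0 < D t Ec" "\<And>t. 0 < t \<Longrightarrow> 0 < D t Ed"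
    using Dpos inW by auto
  have F2: "\<And>t. 0 < t \<Longrightarrow> 0 < p t S0 - p t Rv" "\<And>t. 0 < t \<Longrightarrow> 0 < p t S0 - p t Lv"
     "\<And>t. 0 < t \<Longrightarrow> 0 < p t Rv - p t S1" "\<And>t. 0 < t \<Longrightarrow> 0 < p t Lv - p t S1"
    using alg by auto
  have F3: "\<And>t. 0 < t \<Longrightarrow> D t Ea * (p t S0 - p t Rv) / L Ea + D t Eb * (p t S0 - p t Lv) / L Eb = 1"
    using alg unfolding gdef by (simp add: field_simps)
  have F4: "\<And>t. 0 < t \<Longrightarrow> D t Ec * (p t Rv - p t S1) / L Ec + D t Ed * (p t Lv - p t S1) / L Ed = 1"
    using alg unfolding gdef by (simp add: field_simps)
  have F5: "\<And>t. 0 < t \<Longrightarrow> D t Ea * (p t S0 - p t Rv)\<^sup>2 / L Ea + D t Eb * (p t S0 - p t Lv)\<^sup>2 / L Eb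
       + D t Ec * (p t Rv - p t S1)\<^sup>2 / L Ec + D t Ed * (p t Lv - p t S1)\<^sup>2 / L Ed \<le> p t S0 - p t S1"
    using alg unfolding gdef by (simp add: field_simps)
  have Dt0: "0 < (g Eb t + g Ed t + g Ee t) * (g Ea t + g Ec t + g Ee t) - (g Ee t)\<^sup>2" if "0 < t" for t
  proof -
    have "0 < (g Eb t + g Ed t) * (g Ea t + g Ec t)"
      using gpos inW that by (intro mult_pos_pos add_pos_pos) auto
    then show ?thesis using alg[of t] that by linarith
  qed
  have F6: "\<And>t. 0 < t \<Longrightarrow> 0 < w t" unfolding w_def using Dt0 by simp
  have F7: "\<And>t. 0 < t \<Longrightarrow> p t Lv - p t Rv = (p t S0 - p t S1) * ((D t Eb / L Eb) * (D t Ec / L Ec) - (D t Ea / L Ea) * (D t Ed / L Ed)) * w t"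
  proof -
    fix t :: real assume t: "0 < t"
    have "(p t Lv - p t Rv) * ((g Eb t + g Ed t + g Ee t) * (g Ea t + g Ec t + g Ee t) - (g Ee t)\<^sup>2)
        = (p t S0 - p t S1) * (g Eb t * g Ec t - g Ea t * g Ed t)" using alg t by simp
    then have "p t Lv - p t Rv = (p t S0 - p t S1) * (g Eb t * g Ec t - g Ea t * g Ed t) * w t"
      unfolding w_def using Dt0[OF t] by (simp add: field_simps)
    then show "p t Lv - p t Rv = (p t S0 - p t S1) * ((D t Eb / L Eb) * (D t Ec / L Ec) - (D t Ea / L Ea) * (D t Ed / L Ed)) * w t"
      unfolding gdef .
  qed
  have F8: "\<And>t. 0 < t \<Longrightarrow> w t * ((D t Eb / L Eb + D t Ed / L Ed) * (D t Ea / L Ea + D t Ec / L Ec)) \<le> 1"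
  proof -
    fix t :: real assume t: "0 < t"
    have "(g Eb t + g Ed t) * (g Ea t + g Ec t) \<le> (g Eb t + g Ed t + g Ee t) * (g Ea t + g Ec t + g Ee t) - (g Ee t)\<^sup>2"
      using alg t by simp
    then have "w t * ((g Eb t + g Ed t) * (g Ea t + g Ec t)) \<le> 1"
      unfolding w_def using Dt0[OF t] by (simp add: field_simps)
    then show "w t * ((D t Eb / L Eb + D t Ed / L Ed) * (D t Ea / L Ea + D t Ec / L Ec)) \<le> 1"
      unfolding gdef .
  qed
  have dv: "((\<lambda>s. D s x) has_real_derivative D t x * ((p t (fst (ends x)) - p t (snd (ends x))) / L x - 1)) (at t)"
    if x: "x \<in> wedges" "x \<noteq> Ee" and t: "0 < t" for x t
  proof -
    have t0: "0 \<le> t" using t by simp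
    have Lx: "0 < L x" using assms(1) x(1) by blast
    have pos: "0 < p t (fst (ends x)) - p t (snd (ends x))"
      using alg[OF t0] x unfolding wedges_def by (cases x) auto
    have "\<bar>current L (D t) (p t) x\<bar> - D t x = D t x * ((p t (fst (ends x)) - p t (snd (ends x))) / L x - 1)"
    proof -
      have "0 < current L (D t) (p t) x"
        unfolding cur[OF x(1) t0] using gpos[OF x(1) t0] pos by simp
      then have "\<bar>current L (D t) (p t) x\<bar> = current L (D t) (p t) x" by simp
      also have "\<dots> = D t x / L x * (p t (fst (ends x)) - p t (snd (ends x)))"
        unfolding cur[OF x(1) t0] g_def ..
      finally show ?thesis using Lx by (simp add: field_simps)
    qed
    moreover have "((\<lambda>s. D s x) has_real_derivative \<bar>current L (D t) (p t) x\<bar> - D t x) (at t)"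
      by (rule deriv_at_from_within[OF der[OF x(1) t0] t])
    ultimately show ?thesis by simp
  qed
  have F9: "\<And>t. 0 < t \<Longrightarrow> ((\<lambda>s. D s Ea) has_real_derivative D t Ea * ((p t S0 - p t Rv) / L Ea - 1)) (at t)"
    "\<And>t. 0 < t \<Longrightarrow> ((\<lambda>s. D s Eb) has_real_derivative D t Eb * ((p t S0 - p t Lv) / L Eb - 1)) (at t)"
    "\<And>t. 0 < t \<Longrightarrow> ((\<lambda>s. D s Ec) has_real_derivative D t Ec * ((p t Rv - p t S1) / L Ec - 1)) (at t)"
    "\<And>t. 0 < t \<Longrightarrow> ((\<lambda>s. D s Ed) has_real_derivative D t Ed * ((p t Lv - p t S1) / L Ed - 1)) (at t)"
    using dv[OF inW(1)] dv[OF inW(2)] dv[OF inW(3)] dv[OF inW(4)] by auto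
  interpret W: wsys "L Ea" "L Eb" "L Ec" "L Ed" ?xa ?xb ?xc ?xd ?da ?db ?dc ?dd ?de ?P w
    by unfold_locales (use Lp F1 F2 F3 F4 F5 F6 F7 F8 F9 in \<open>simp_all\<close>)
  interpret W2: wsys "L Eb" "L Ea" "L Ed" "L Ec" ?xb ?xa ?xd ?xc ?db ?da ?dd ?dc "\<lambda>t. - (p t Lv - p t Rv)" ?P w
  proof unfold_locales
    fix t :: real assume t: "0 < t"
    show "D t Eb * (p t S0 - p t Lv) / L Eb + D t Ea * (p t S0 - p t Rv) / L Ea = 1"
      using F3[OF t] by (simp add: add.commute)
    show "D t Ed * (p t Lv - p t S1) / L Ed + D t Ec * (p t Rv - p t S1) / L Ec = 1"
      using F4[OF t] by (simp add: add.commute)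
    show "D t Eb * (p t S0 - p t Lv)\<^sup>2 / L Eb + D t Ea * (p t S0 - p t Rv)\<^sup>2 / L Ea
       + D t Ed * (p t Lv - p t S1)\<^sup>2 / L Ed + D t Ec * (p t Rv - p t S1)\<^sup>2 / L Ec \<le> p t S0 - p t S1"
      using F5[OF t] by (simp add: ac_simps)
    show "- (p t Lv - p t Rv) = (p t S0 - p t Lv) - (p t S0 - p t Rv)" by simp
    show "- (p t Lv - p t Rv) = (p t S0 - p t S1) * (D t Ea / L Ea * (D t Ed / L Ed) - D t Eb / L Eb * (D t Ec / L Ec)) * w t"
      using F7[OF t] by (simp add: algebra_simps)
    show "w t * ((D t Ea / L Ea + D t Ec / L Ec) * (D t Eb / L Eb + D t Ed / L Ed)) \<le> 1"
      using F8[OF t] by (simp add: ac_simps)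
  qed (use Lp F1 F2 F3 F4 F5 F6 F7 F8 F9 in \<open>simp_all\<close>)
  have Econc: "(\<forall>\<^sub>F t in at_top. ?de t > 0) \<or> (\<forall>\<^sub>F t in at_top. ?de t < 0) \<or> ((\<lambda>t. \<bar>?de t\<bar>) \<longlongrightarrow> 0) at_top"
  proof (cases "(L Ea \<le> L Eb \<and> L Ed \<le> L Ec \<and> (L Ea < L Eb \<or> L Ed < L Ec)) \<or> (L Ea < L Eb \<and> L Ec < L Ed)")
    case True
    then show ?thesis by (rule W.main_AB)
  next
    case False
    have "\<not> (L Ea = L Eb \<and> L Ec = L Ed)" using no_tie[OF assms(3)] by blast
    then have "(L Eb \<le> L Ea \<and> L Ec \<le> L Ed \<and> (L Eb < L Ea \<or> L Ec < L Ed)) \<or> (L Eb < L Ea \<and> L Ed < L Ec)"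
      using False by auto
    then have "(\<forall>\<^sub>F t in at_top. - ?de t > 0) \<or> (\<forall>\<^sub>F t in at_top. - ?de t < 0) \<or> ((\<lambda>t. \<bar>- ?de t\<bar>) \<longlongrightarrow> 0) at_top"
      by (rule W2.main_AB)
    moreover have "(\<lambda>t. \<bar>- ?de t\<bar>) = (\<lambda>t. \<bar>?de t\<bar>)" by (simp only: abs_minus_cancel)
    ultimately show ?thesis by (simp only: neg_0_less_iff_less neg_less_0_iff_less) auto
  qed
  have evpos: "\<forall>\<^sub>F t in at_top. (0::real) < t" by (rule eventually_gt_at_top)
  have dirs: "\<forall>\<^sub>F t in at_top. p t S0 > p t Rv" "\<forall>\<^sub>F t in at_top. p t S0 > p t Lv"
     "\<forall>\<^sub>F t in at_top. p t Rv > p t S1" "\<forall>\<^sub>F t in at_top. p t Lv > p t S1"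
    by (rule eventually_mono[OF evpos], use F2 in force)+
  show ?thesis
  proof
    fix x assume "x \<in> wedges"
    then have "x = Ea \<or> x = Eb \<or> x = Ec \<or> x = Ed \<or> x = Ee" unfolding wedges_def by auto
    then show "becomes_horizontal p x \<or> becomes_directed p x"
    proof (elim disjE)
      assume "x = Ea" then show ?thesis using dirs(1) by (simp add: becomes_directed_def directed_from_def)
    next
      assume "x = Eb" then show ?thesis using dirs(2) by (simp add: becomes_directed_def directed_from_def)
    next
      assume "x = Ec" then show ?thesis using dirs(3) by (simp add: becomes_directed_def directed_from_def)
    next
      assume "x = Ed" then show ?thesis using dirs(4) by (simp add: becomes_directed_def directed_from_def)
    next
      assume "x = Ee" then show ?thesis using Econc
        by (auto simp: becomes_directed_def directed_from_def becomes_horizontal_def)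
    qed
  qed
qed

end
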